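(* Let $G$ be a connected graph with minimum degree $\delta\geq 2$ such that $|d_i-d_j|\leq (2\delta-1)^{2}$ for every edge $v_iv_j\in E(G)$. Then $GA(G)>ABC(G)$.
   Context: All graphs are finite, simple and undirected; $d_i$ denotes the degree of vertex $v_i$. The first geometric-arithmetic index is $GA(G)=\sum_{v_iv_j\in E(G)}\frac{2\sqrt{d_id_j}}{d_i+d_j}$ and the atom-bond connectivity index is $ABC(G)=\sum_{v_iv_j\in E(G)}\sqrt{\frac{d_i+d_j-2}{d_id_j}}$. *)

theory Defs
  imports Complex_Main
begin

definition simple_graph :: "'a set \<Rightarrow> 'a set set \<Rightarrow> bool" where
  "simple_graph V E \<longleftrightarrow> finite V \<and> (\<forall>e\<in>E. e \<subseteq> V \<and> card e = 2)"

definition degree :: "'a set set \<Rightarrow> 'a \<Rightarrow> nat" where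
  "degree E v = card {e\<in>E. v \<in> e}"

definition adj :: "'a set set \<Rightarrow> 'a \<Rightarrow> 'a \<Rightarrow> bool" where
  "adj E u v \<longleftrightarrow> {u, v} \<in> E"

definition connected_graph :: "'a set \<Rightarrow> 'a set set \<Rightarrow> bool" where
  "connected_graph V E \<longleftrightarrow> V \<noteq> {} \<and>
     (\<forall>u\<in>V. \<forall>v\<in>V. (u, v) \<in> {(x, y). adj E x y}\<^sup>*)"

definition min_degree :: "'a set \<Rightarrow> 'a set set \<Rightarrow> nat" where
  "min_degree V E = Min (degree E ` V)"

text \<open>Each edge e = {u,v} contributes f(d_u, d_v) for a symmetric f; we write the
  summand using the two endpoints of e.\<close>
definition GA :: "'a set \<Rightarrow> 'a set set \<Rightarrow> real" where
  "GA V E = (\<Sum>e\<in>E. THE r. \<exists>u v. e = {u, v} \<and> u \<noteq> v \<and>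
      r = 2 * sqrt (real (degree E u) * real (degree E v)) / (real (degree E u) + real (degree E v)))"

definition ABC :: "'a set \<Rightarrow> 'a set set \<Rightarrow> real" where
  "ABC V E = (\<Sum>e\<in>E. THE r. \<exists>u v. e = {u, v} \<and> u \<noteq> v \<and>
      r = sqrt ((real (degree E u) + real (degree E v) - 2) / (real (degree E u) * real (degree E v))))"

end

theory Submission imports Defs begin

lemma poly_ineq:
  fixes a t :: real
  assumes a: "a \<ge> 2" and t0: "0 \<le> t" and tT: "t \<le> (2*a-1)^2"
  shows "(2*a+t)^2*(2*a+t-2) < 4*a^2*(a+t)^2"
proof -
  define T where "T = (2*a-1)^2"
  define q where "q = (\<lambda>t. -(2*a-1)*t^2+(8*a^3-12*a^2+8*a)*t+4*a^4-8*a^3+8*a^2)"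
  have fq: "4*a^2*(a+t)^2 - (2*a+t)^2*(2*a+t-2) = q t + t^2*(T-t)"
    unfolding q_def T_def by (simp add: algebra_simps power2_eq_square power3_eq_cube power4_eq_xxxx)
  have Tp: "T > 0" unfolding T_def using a by simp
  have q0: "q 0 > 0"
  proof -
    have "q 0 = 4*a^2*((a-1)^2 + 1)" unfolding q_def by (simp add: algebra_simps power2_eq_square power3_eq_cube power4_eq_xxxx)
    thus ?thesis using a by (simp add: add_pos_nonneg)
  qed
  have qT: "q T > 0"
  proof -
    have "q T = 4*a^4 + 4*(a*a) - 2*a + 1" unfolding q_def T_def
      by (simp add: algebra_simps power2_eq_square power3_eq_cube power4_eq_xxxx)
    moreover have "4*(a*a) \<ge> 8*a" using a by (simp add: mult_right_mono)
    moreover have "a^4 \<ge> 0" by simp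
    ultimately show ?thesis using a by linarith
  qed
  have interp: "T * q t = (2*a-1)*t*(T-t)*T + (T-t)*q 0 + t * q T"
    unfolding q_def T_def by (simp add: algebra_simps power2_eq_square power3_eq_cube power4_eq_xxxx)
  have tT': "t \<le> T" using tT T_def by simp
  have A: "(2*a-1)*t*(T-t)*T \<ge> 0" using a t0 tT' Tp by simp
  have B: "(T-t)*q 0 + t * q T > 0"
  proof (cases "t = 0")
    case True thus ?thesis using Tp q0 by simp
  next
    case False hence "t > 0" using t0 by simp
    hence "t * q T > 0" using qT by simp
    moreover have "(T-t)*q 0 \<ge> 0" using tT' q0 by simp
    ultimately show ?thesis by simp
  qed
  have "T * q t > 0" using interp A B by simp
  hence "q t > 0" using Tp by (simp add: zero_less_mult_iff)
  moreover have "t^2*(T-t) \<ge> 0" using tT' by simp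
  ultimately show ?thesis using fq by simp
qed


lemma poly_sym:
  fixes x y d :: real
  assumes d: "d \<ge> 2" and x: "x \<ge> d" and y: "y \<ge> d" and xy: "x \<le> y"
    and diff: "\<bar>x - y\<bar> \<le> (2*d-1)^2"
  shows "(x+y)^2*(x+y-2) < 4*(x*y)^2"
proof -
  have "(2*d-1)^2 \<le> (2*x-1)^2" using d x by (intro power_mono) auto
  hence "y - x \<le> (2*x-1)^2" using diff xy by simp
  from poly_ineq[OF _ _ this] d x xy
  have "(2*x+(y-x))^2*(2*x+(y-x)-2) < 4*x^2*(x+(y-x))^2" by simp
  thus ?thesis by (simp add: power_mult_distrib algebra_simps)
qed

lemma edge_ineq:
  fixes x y d :: real
  assumes d: "d \<ge> 2" and x: "x \<ge> d" and y: "y \<ge> d"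
    and diff: "\<bar>x - y\<bar> \<le> (2*d-1)^2"
  shows "sqrt ((x+y-2)/(x*y)) < 2*sqrt(x*y)/(x+y)"
proof -
  have P: "(x+y)^2*(x+y-2) < 4*(x*y)^2"
  proof (cases "x \<le> y")
    case True thus ?thesis using poly_sym[OF d x y True diff] by simp
  next
    case False
    have "\<bar>y - x\<bar> \<le> (2*d-1)^2" using diff by simp
    with poly_sym[OF d y x _ this] False show ?thesis by (simp add: algebra_simps)
  qed
  have xp: "x > 0" and yp: "y > 0" using d x y by auto
  have Q: "(x+y-2)/(x*y) < 4*(x*y)/(x+y)^2"
  proof -
    have xyp: "x*y > 0" and sp: "(x+y)^2 > 0" using xp yp by auto
    have "(x+y-2) < 4*(x*y)*(x*y)/(x+y)^2"
    proof (subst pos_less_divide_eq[OF sp])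
      have "4*(x*y)*(x*y) = 4*(x*y)^2" by (simp add: power2_eq_square)
      thus "(x+y-2)*(x+y)^2 < 4*(x*y)*(x*y)" using P by (simp add: mult.commute)
    qed
    also have "\<dots> = 4*(x*y)/(x+y)^2 * (x*y)" by simp
    finally show ?thesis using xyp by (simp add: pos_divide_less_eq)
  qed
  have R: "sqrt (4*(x*y)/(x+y)^2) = 2*sqrt(x*y)/(x+y)"
    using xp yp by (simp add: real_sqrt_divide real_sqrt_mult)
  show ?thesis using Q R real_sqrt_less_mono by metis
qed

lemma the_sym:
  fixes g :: "'a \<Rightarrow> 'a \<Rightarrow> real"
  assumes sym: "\<And>u v. g u v = g v u" and e: "e = {u, v}" and uv: "u \<noteq> v"
  shows "(THE r. \<exists>u v. e = {u, v} \<and> u \<noteq> v \<and> r = g u v) = g u v"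
proof (rule the_equality)
  show "\<exists>u' v'. e = {u', v'} \<and> u' \<noteq> v' \<and> g u v = g u' v'" using e uv by blast
next
  fix r assume "\<exists>u' v'. e = {u', v'} \<and> u' \<noteq> v' \<and> r = g u' v'"
  then obtain u' v' where "{u, v} = {u', v'}" "r = g u' v'" using e by blast
  thus "r = g u v" using sym by (auto simp: doubleton_eq_iff)
qed

theorem theorem3p5:
  fixes V :: "'a set" and E :: "'a set set"
  assumes "simple_graph V E"
    and "connected_graph V E"
    and "min_degree V E \<ge> 2"
    and "\<forall>u v. {u, v} \<in> E \<longrightarrow>
           \<bar>real (degree E u) - real (degree E v)\<bar> \<le> (2 * real (min_degree V E) - 1) ^ 2"
  shows "GA V E > ABC V E"
proof -
  have finV: "finite V" and Es: "\<And>e. e \<in> E \<Longrightarrow> e \<subseteq> V \<and> card e = 2"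
    using assms(1) unfolding simple_graph_def by auto
  have finE: "finite E"
    using finV Es by (meson Pow_iff finite_Pow_iff rev_finite_subset subsetI)
  have mind: "\<And>u. u \<in> V \<Longrightarrow> min_degree V E \<le> degree E u"
    unfolding min_degree_def using finV by simp
  obtain v where v: "v \<in> V" using assms(2) unfolding connected_graph_def by auto
  have "degree E v \<ge> 2" using mind[OF v] assms(3) by simp
  hence "{e\<in>E. v \<in> e} \<noteq> {}" unfolding degree_def by (metis card.empty not_numeral_le_zero)
  hence Ene: "E \<noteq> {}" by auto
  let ?d = "real (min_degree V E)"
  let ?ga = "\<lambda>u v. 2 * sqrt (real (degree E u) * real (degree E v)) / (real (degree E u) + real (degree E v))"
  let ?abc = "\<lambda>u v. sqrt ((real (degree E u) + real (degree E v) - 2) / (real (degree E u) * real (degree E v)))"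
  show ?thesis unfolding GA_def ABC_def
  proof (rule sum_strict_mono[OF finE Ene])
    fix e assume eE: "e \<in> E"
    then obtain u w where e: "e = {u, w}" and uw: "u \<noteq> w"
      using Es[OF eE] by (meson card_2_iff)
    have uV: "u \<in> V" and wV: "w \<in> V" using Es[OF eE] e by auto
    have t1: "(THE r. \<exists>u v. e = {u, v} \<and> u \<noteq> v \<and> r = ?ga u v) = ?ga u w"
      by (rule the_sym[OF _ e uw]) (simp add: algebra_simps)
    have t2: "(THE r. \<exists>u v. e = {u, v} \<and> u \<noteq> v \<and> r = ?abc u v) = ?abc u w"
      by (rule the_sym[OF _ e uw]) (simp add: algebra_simps)
    have "?abc u w < ?ga u w"
    proof (rule edge_ineq)
      show "?d \<ge> 2" using assms(3) by simp
      show "real (degree E u) \<ge> ?d" using mind[OF uV] by simp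
      show "real (degree E w) \<ge> ?d" using mind[OF wV] by simp
      show "\<bar>real (degree E u) - real (degree E w)\<bar> \<le> (2 * ?d - 1)^2"
        using assms(4) eE e by blast
    qed
    thus "(THE r. \<exists>u v. e = {u, v} \<and> u \<noteq> v \<and> r = ?abc u v)
        < (THE r. \<exists>u v. e = {u, v} \<and> u \<noteq> v \<and> r = ?ga u v)" using t1 t2 by simp
  qed
qed

end
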